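(* Let $0<s\le t$ be integers. Then $S_{s,t}=\mathbb{F}_q[x,y]_{s+t}\setminus\mathrm{Im}\,\Phi_{s,t}$.
   Context: $\mathbb{F}_q[x]_{\le s}$ is the set of polynomials in $\mathbb{F}_q[x]$ of degree at most $s$; $\mathbb{F}_q[x,y]_s$ is the space of homogeneous polynomials of degree $s$ in $x,y$ together with $0$. For $p\in\mathbb{F}_q[x,y]_s$, $p_x(x)=p(x,1)$ is its dehomogenization. $\Phi_{s,t}:\mathbb{F}_q[x,y]_s\times\mathbb{F}_q[x,y]_t\to\mathbb{F}_q[x,y]_{s+t}$ is $(f,h)\mapsto fh$, and \[ S_{s,t}=\Big\{p\in\mathbb{F}_q[x,y]_{s+t}:\ \text{if } f\in\mathbb{F}_q[x]_{\le s}\text{ divides }p_x,\ \text{then }\deg\big(p_x/f\big)\ge t+1\Big\}. \] *)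

theory Defs
  imports "HOL-Computational_Algebra.Polynomial"
begin

text \<open>Bivariate polynomials in x,y over a field are represented as
  polynomials in y whose coefficients are polynomials in x:
  the monomial x^i y^j has coefficient  coeff (coeff P j) i.\<close>

type_synonym 'a bipoly = "'a poly poly"

definition bicoeff :: "'a::zero bipoly \<Rightarrow> nat \<Rightarrow> nat \<Rightarrow> 'a" where
  "bicoeff P i j = coeff (coeff P j) i"

definition homog :: "nat \<Rightarrow> 'a::zero bipoly set" where
  "homog s = {P. \<forall>i j. bicoeff P i j \<noteq> 0 \<longrightarrow> i + j = s}"

definition dehom :: "'a::comm_semiring_1 bipoly \<Rightarrow> 'a poly" where
  "dehom P = poly P 1"

definition Phi :: "nat \<Rightarrow> nat \<Rightarrow> 'a::comm_semiring_1 bipoly \<times> 'a bipoly \<Rightarrow> 'a bipoly" where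
  "Phi s t = (\<lambda>(f, h). f * h)"

definition S_set :: "nat \<Rightarrow> nat \<Rightarrow> 'a::field bipoly set" where
  "S_set s t = {p \<in> homog (s + t).
     \<forall>f :: 'a poly. degree f \<le> s \<and> f dvd dehom p \<longrightarrow> degree (dehom p div f) \<ge> t + 1}"

end

theory Submission
  imports Defs
begin

definition hom :: "nat \<Rightarrow> 'a::comm_ring_1 poly \<Rightarrow> 'a bipoly" where
  "hom n q = (\<Sum>i\<le>n. monom (monom (coeff q i) i) (n - i))"

lemma bicoeff_hom: "bicoeff (hom n q) i j = (if i + j = n then coeff q i else 0)"
proof -
  have "coeff (hom n q) j = (\<Sum>k\<le>n. if n - k = j then monom (coeff q k) k else 0)"
    unfolding hom_def coeff_sum coeff_monom by simp
  also have "\<dots> = (if j \<le> n then monom (coeff q (n - j)) (n - j) else 0)"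
  proof (cases "j \<le> n")
    case True
    have "(\<Sum>k\<le>n. if n - k = j then monom (coeff q k) k else 0)
        = (\<Sum>k\<le>n. if k = n - j then monom (coeff q k) k else 0)"
      by (rule sum.cong) (use True in auto)
    then show ?thesis using True by (simp add: sum.delta)
  next
    case False
    then show ?thesis by (intro trans[OF sum.neutral]) auto
  qed
  finally show ?thesis unfolding bicoeff_def by (auto simp: coeff_monom)
qed

lemma hom_homog: "hom n q \<in> homog n"
  unfolding homog_def by (auto simp: bicoeff_hom split: if_splits)

lemma dehom_hom: assumes "degree q \<le> n" shows "dehom (hom n q) = q"
  unfolding dehom_def hom_def poly_sum poly_monom
  using poly_as_sum_of_monoms'[OF assms] by simp

lemma bipoly_eqI: "(\<And>i j. bicoeff P i j = bicoeff Q i j) \<Longrightarrow> P = Q"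
  unfolding bicoeff_def by (simp add: poly_eq_iff)

lemma homog_degree: assumes "P \<in> homog n" shows "degree P \<le> n"
proof (rule degree_le)
  show "\<forall>j>n. coeff P j = 0"
    using assms unfolding homog_def bicoeff_def by (auto simp: poly_eq_iff)
qed

lemma coeff_dehom: assumes "P \<in> homog n"
  shows "coeff (dehom P) i = (\<Sum>j\<le>n. bicoeff P i j)"
proof -
  have "dehom P = (\<Sum>j\<le>n. coeff P j)"
    unfolding dehom_def using homog_degree[OF assms]
    by (simp add: poly_altdef) (rule sum.mono_neutral_left, auto simp: coeff_eq_0)
  then show ?thesis by (simp add: coeff_sum bicoeff_def)
qed

lemma homog_hom_dehom: assumes "P \<in> homog n" shows "P = hom n (dehom P)"
proof (rule bipoly_eqI)
  fix i j
  have h: "bicoeff P i j \<noteq> 0 \<Longrightarrow> i + j = n" for i j using assms unfolding homog_def by auto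
  show "bicoeff P i j = bicoeff (hom n (dehom P)) i j"
  proof (cases "i + j = n")
    case True
    have "(\<Sum>j'\<le>n. bicoeff P i j') = (\<Sum>j'\<in>{j}. bicoeff P i j')"
      by (rule sum.mono_neutral_right) (use True in \<open>auto dest!: h\<close>)
    then show ?thesis using True by (simp add: bicoeff_hom coeff_dehom[OF assms])
  next
    case False
    then show ?thesis using h by (auto simp: bicoeff_hom)
  qed
qed

lemma dehom_degree: assumes "P \<in> homog n" shows "degree (dehom P) \<le> n"
proof (rule degree_le)
  have h: "bicoeff P i j \<noteq> 0 \<Longrightarrow> i + j = n" for i j using assms unfolding homog_def by auto
  show "\<forall>i>n. coeff (dehom P) i = 0"
    using h by (auto simp: coeff_dehom[OF assms] intro!: sum.neutral)
qed

lemma dehom_mult: "dehom (P * Q) = dehom P * dehom Q"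
  unfolding dehom_def by simp

lemma homog_mult: assumes "P \<in> homog s" "Q \<in> homog t" shows "P * Q \<in> homog (s + t)"
proof -
  have hP: "coeff (coeff P j) a \<noteq> 0 \<Longrightarrow> a + j = s" for a j using assms(1) unfolding homog_def bicoeff_def by auto
  have hQ: "coeff (coeff Q j) a \<noteq> 0 \<Longrightarrow> a + j = t" for a j using assms(2) unfolding homog_def bicoeff_def by auto
  show ?thesis unfolding homog_def bicoeff_def
  proof (intro CollectI allI impI)
    fix i k assume nz: "coeff (coeff (P * Q) k) i \<noteq> 0"
    have "coeff (coeff (P * Q) k) i = (\<Sum>j\<le>k. \<Sum>a\<le>i. coeff (coeff P j) a * coeff (coeff Q (k - j)) (i - a))"
      by (simp add: coeff_mult coeff_sum)
    with nz obtain j a where "j \<le> k" "a \<le> i" "coeff (coeff P j) a * coeff (coeff Q (k - j)) (i - a) \<noteq> 0"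
      by (metis (no_types, lifting) atMost_iff sum.neutral)
    then have "coeff (coeff P j) a \<noteq> 0" "coeff (coeff Q (k - j)) (i - a) \<noteq> 0" by auto
    then show "i + k = s + t" using hP[of j a] hQ[of "k - j" "i - a"] \<open>j \<le> k\<close> \<open>a \<le> i\<close> by linarith
  qed
qed

lemma hom_mult: assumes "degree f \<le> s" "degree g \<le> t"
  shows "hom s f * hom t g = hom (s + t) (f * g)"
proof -
  have "hom s f * hom t g = hom (s + t) (dehom (hom s f * hom t g))"
    by (rule homog_hom_dehom[OF homog_mult[OF hom_homog hom_homog]])
  also have "\<dots> = hom (s + t) (f * g)"
    by (simp add: dehom_mult dehom_hom assms)
  finally show ?thesis .
qed

theorem lemma3p16:
  fixes s t :: nat
  assumes "0 < s" and "s \<le> t"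
  shows "(S_set s t :: ('a::{field,finite}) bipoly set)
           = homog (s + t) - Phi s t ` (homog s \<times> homog t)"
proof (intro equalityI subsetI)
  fix p :: "'a bipoly" assume p: "p \<in> S_set s t"
  then have ph: "p \<in> homog (s + t)" unfolding S_set_def by auto
  moreover have "p \<notin> Phi s t ` (homog s \<times> homog t)"
  proof
    assume "p \<in> Phi s t ` (homog s \<times> homog t)"
    then obtain f h where f: "f \<in> homog s" and h: "h \<in> homog t" and pe: "p = f * h"
      unfolding Phi_def by auto
    have dp: "dehom p = dehom f * dehom h" using pe dehom_mult by simp
    have "degree (dehom p div dehom f) \<le> t"
    proof (cases "dehom f = 0")
      case True then show ?thesis using dp by simp
    next
      case False then show ?thesis using dp dehom_degree[OF h] by simp
    qed
    moreover have "degree (dehom p div dehom f) \<ge> t + 1"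
      using p dehom_degree[OF f] dp unfolding S_set_def by auto
    ultimately show False by simp
  qed
  ultimately show "p \<in> homog (s + t) - Phi s t ` (homog s \<times> homog t)" by simp
next
  fix p :: "'a bipoly" assume p: "p \<in> homog (s + t) - Phi s t ` (homog s \<times> homog t)"
  then have ph: "p \<in> homog (s + t)" and ni: "p \<notin> Phi s t ` (homog s \<times> homog t)" by auto
  show "p \<in> S_set s t" unfolding S_set_def
  proof (intro CollectI conjI ph allI impI)
    fix f :: "'a poly" assume a: "degree f \<le> s \<and> f dvd dehom p"
    show "degree (dehom p div f) \<ge> t + 1"
    proof (rule ccontr)
      assume "\<not> ?thesis"
      then have dg: "degree (dehom p div f) \<le> t" by simp
      have e: "dehom p = f * (dehom p div f)" using a by simp
      have "p = hom s f * hom t (dehom p div f)"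
        using homog_hom_dehom[OF ph] hom_mult[OF _ dg, of f s] a e by simp
      then have "p \<in> Phi s t ` (homog s \<times> homog t)"
        unfolding Phi_def using hom_homog by (auto intro!: image_eqI[where x="(hom s f, hom t (dehom p div f))"])
      with ni show False by simp
    qed
  qed
qed

end
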